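(* For a suitable choice of absolute constants $c_0>0$, $c_5>0$, the following holds: for $x\geqslant y\geqslant 2$ with $\psi(y)>2\log x$, every integer $q$ with $q\leqslant y^{c_0/\log_2y}$, every non-principal Dirichlet character $\chi$ modulo $q$ and every $\tau\in\mathbb R$, $$\Big|\frac{Z(\beta+i\tau,\chi;y)}{Z_q(\beta,y)}\Big|\leqslant e^{-c_5\mathcal W_q(y,\tau;\chi)}.$$
   Context: For a prime $p$, $\nu_p:=\lfloor\log y/\log p\rfloor$; $\psi(y):=\sum_{p\leqslant y}\nu_p\log p$; $\log_2=\log\log$. For $\Re s>0$, $Z_q(s,y):=\prod_{p\leqslant y,\,p\nmid q}\frac{1-p^{-(\nu_p+1)s}}{1-p^{-s}}$, $Z(s,y):=Z_1(s,y)$, and for a Dirichlet character $\chi$, $Z(s,\chi;y):=\prod_{p\leqslant y}\frac{1-\chi(p)^{\nu_p+1}p^{-(\nu_p+1)s}}{1-\chi(p)p^{-s}}$. When $\psi(y)>2\log x$, $\beta=\beta(x,y)$ is the unique $\sigma>0$ with $-Z'(\sigma,y)/Z(\sigma,y)=\log x$. Finally $\mathcal W_q(y,\tau;\chi):=\sum_{p\leqslant y,\,p\nmid q}\frac{\{1-\Re(\chi(p)p^{-i\tau})\}^2}{p^\beta}$. *)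

theory Defs
  imports "HOL-Analysis.Analysis" "HOL-Computational_Algebra.Primes"
begin

definition nu :: "real \<Rightarrow> nat \<Rightarrow> nat" where
  "nu y p = nat \<lfloor>ln y / ln (real p)\<rfloor>"

definition psi :: "real \<Rightarrow> real" where
  "psi y = (\<Sum>p | prime p \<and> real p \<le> y. real (nu y p) * ln (real p))"

definition Zq :: "nat \<Rightarrow> real \<Rightarrow> real \<Rightarrow> real" where
  "Zq q s y = (\<Prod>p | prime p \<and> real p \<le> y \<and> \<not> p dvd q.
      (1 - real p powr (- (real (nu y p + 1) * s))) / (1 - real p powr (- s)))"

definition Z :: "real \<Rightarrow> real \<Rightarrow> real" where
  "Z s y = Zq 1 s y"

definition Zchi :: "complex \<Rightarrow> (nat \<Rightarrow> complex) \<Rightarrow> real \<Rightarrow> complex" where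
  "Zchi s chi y = (\<Prod>p | prime p \<and> real p \<le> y.
      (1 - chi p ^ (nu y p + 1) * of_nat p powr (- (of_nat (nu y p + 1) * s)))
      / (1 - chi p * of_nat p powr (- s)))"

definition saddle :: "real \<Rightarrow> real \<Rightarrow> real" where
  "saddle x y = (THE \<sigma>. \<sigma> > 0 \<and> - deriv (\<lambda>s. Z s y) \<sigma> / Z \<sigma> y = ln x)"

definition W :: "nat \<Rightarrow> real \<Rightarrow> real \<Rightarrow> (nat \<Rightarrow> complex) \<Rightarrow> real \<Rightarrow> real" where
  "W q y \<tau> chi \<beta> = (\<Sum>p | prime p \<and> real p \<le> y \<and> \<not> p dvd q.
      (1 - Re (chi p * of_nat p powr (- (\<i> * of_real \<tau>))))\<^sup>2 / real p powr \<beta>)"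

definition dirichlet_char :: "nat \<Rightarrow> (nat \<Rightarrow> complex) \<Rightarrow> bool" where
  "dirichlet_char q chi \<longleftrightarrow> q \<ge> 1 \<and>
     (\<forall>m n. chi (m * n) = chi m * chi n) \<and>
     (\<forall>n. chi (n + q) = chi n) \<and>
     (\<forall>n. chi n \<noteq> 0 \<longleftrightarrow> coprime n q)"

definition principal_char :: "nat \<Rightarrow> (nat \<Rightarrow> complex) \<Rightarrow> bool" where
  "principal_char q chi \<longleftrightarrow> (\<forall>n. chi n = (if coprime n q then 1 else 0))"

end

theory Submission
  imports Defs "HOL-Number_Theory.Number_Theory"
begin


lemma one_plus_bound:
  fixes u :: complex and r :: real
  assumes r0: "0 \<le> r" and r1: "r \<le> 1" and u1: "cmod u \<le> 1"
  shows "cmod (1 + of_real r * u) \<le> 1 + r - r * (1 - Re u) / 2"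
proof -
  define a where "a = 1 - Re u"
  have reu: "\<bar>Re u\<bar> \<le> 1" using abs_Re_le_cmod u1 by (meson order_trans)
  have a0: "0 \<le> a" "a \<le> 2" using reu by (auto simp: a_def)
  have "(cmod u)^2 \<le> 1" using u1 norm_ge_zero by (simp add: power_le_one)
  hence ru: "(Re u)^2 + (Im u)^2 \<le> 1" by (simp add: cmod_power2)
  define m where "m = cmod (1 + of_real r * u)"
  have m2: "m^2 = (1 + r * Re u)^2 + (r * Im u)^2"
    by (simp add: m_def cmod_power2)
  have "m^2 \<le> (1+r)^2 - 2*r*a"
  proof -
    have "(1 + r * Re u)^2 + (r * Im u)^2 = 1 + 2*r*Re u + r^2 * ((Re u)^2 + (Im u)^2)"
      by (simp add: power2_eq_square algebra_simps)
    also have "\<dots> \<le> 1 + 2*r*Re u + r^2" using ru r0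
      by (simp add: mult_left_le)
    finally show ?thesis using m2 by (simp add: a_def power2_eq_square algebra_simps)
  qed
  moreover have m0: "0 \<le> m" by (simp add: m_def)
  moreover have "0 \<le> 1 + r - r*a/2"
  proof -
    have "r*a \<le> r*2" using a0 r0 by (intro mult_left_mono) auto
    thus ?thesis using r0 by linarith
  qed
  ultimately have "m \<le> 1 + r - r*a/2"
  proof -
    assume h: "m^2 \<le> (1+r)^2 - 2*r*a" "0 \<le> m" "0 \<le> 1 + r - r*a/2"
    have "(1 + r - r*a/2)^2 \<ge> (1+r)^2 - 2*r*a"
    proof -
      have "(1 + r - r*a/2)^2 - ((1+r)^2 - 2*r*a) = r*a*(1-r) + r^2*a^2/4"
        by (simp add: power2_eq_square algebra_simps)
      moreover have "0 \<le> r*a*(1-r)" using r0 r1 a0 by simp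
      ultimately show ?thesis by (smt (verit) zero_le_power2 divide_nonneg_pos power_mult_distrib)
    qed
    hence "m^2 \<le> (1 + r - r*a/2)^2" using h by linarith
    thus ?thesis using h power2_le_imp_le by blast
  qed
  thus ?thesis by (simp add: m_def a_def)
qed

lemma geom_bound:
  fixes u :: complex and r :: real
  assumes r0: "0 \<le> r" and r1: "r \<le> 1" and u1: "cmod u \<le> 1" and n1: "1 \<le> n"
  shows "cmod (\<Sum>k\<le>n. (of_real r * u)^k) \<le> (\<Sum>k\<le>n. r^k) * (1 - r * (1 - Re u) / 8)"
proof -
  define a where "a = 1 - Re u"
  define z where "z = of_real r * u"
  define c where "c = 1 - r * a / 8"
  have reu: "\<bar>Re u\<bar> \<le> 1" using abs_Re_le_cmod u1 by (meson order_trans)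
  have a0: "0 \<le> a" "a \<le> 2" using reu by (auto simp: a_def)
  have ra: "0 \<le> r*a" "r*a \<le> 2" using a0 r0 r1 mult_mono[of r 1 a 2] by auto
  have b1: "cmod (1 + z) \<le> 1 + r - r*a/2" using one_plus_bound[OF r0 r1 u1] by (simp add: z_def a_def)
  have b1': "cmod (1 + z) \<le> (1 + r) * c"
  proof -
    have "(1+r) * (r*a) \<le> 2 * (r*a)" using r1 ra by (intro mult_right_mono) auto
    moreover have "(1+r)*c = 1 + r - (1+r)*(r*a)/8" by (simp add: c_def algebra_simps)
    ultimately show ?thesis using b1 ra by linarith
  qed
  have zk: "cmod (z^k) \<le> r^k" for k using u1 r0
    by (simp add: z_def norm_power norm_mult power_mono mult_left_le)
  have c0: "0 \<le> c" using ra by (simp add: c_def)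
  have main: "cmod (\<Sum>k\<le>m+1. z^k) \<le> (\<Sum>k\<le>m+1. r^k) * c \<and>
              cmod (\<Sum>k\<le>m+2. z^k) \<le> (\<Sum>k\<le>m+2. r^k) * c" for m
  proof (induction m)
    case 0
    have s1: "cmod (\<Sum>k\<le>1. z^k) \<le> (\<Sum>k\<le>1. r^k) * c" using b1' by (simp add: add.commute)
    have "cmod (\<Sum>k\<le>2. z^k) = cmod ((1 + z) + z^2)"
      by (simp add: numeral_2_eq_2 add.commute)
    also have "\<dots> \<le> cmod (1 + z) + cmod (z^2)" by (rule norm_triangle_ineq)
    also have "\<dots> \<le> 1 + r - r*a/2 + r^2" using b1 zk[of 2] by linarith
    also have "\<dots> \<le> (1 + r + r^2) * c"
    proof -
      have "r^2 \<le> 1" using r0 r1 by (simp add: power_le_one)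
      hence "(1 + r + r^2) * (r*a) \<le> 4 * (r*a)" using r1 ra by (intro mult_right_mono) auto
      thus ?thesis by (simp add: c_def algebra_simps)
    qed
    also have "\<dots> = (\<Sum>k\<le>2. r^k) * c" by (simp add: numeral_2_eq_2)
    finally have h2: "cmod (\<Sum>k\<le>2. z^k) \<le> (\<Sum>k\<le>2. r^k) * c" .
    show ?case using s1 h2 unfolding add_0 by blast
  next
    case (Suc m)
    have eq1: "(\<Sum>k\<le>m+3. z^k) = (\<Sum>k\<le>m+1. z^k) + z^(m+2) * (1 + z)"
      by (simp add: numeral_3_eq_3 algebra_simps)
    have eq2: "(\<Sum>k\<le>m+3. r^k) = (\<Sum>k\<le>m+1. r^k) + r^(m+2) * (1 + r)"
      by (simp add: numeral_3_eq_3 algebra_simps)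
    have "cmod (\<Sum>k\<le>m+3. z^k) \<le> cmod (\<Sum>k\<le>m+1. z^k) + cmod (z^(m+2)) * cmod (1 + z)"
      unfolding eq1 by (metis norm_triangle_ineq norm_mult)
    also have "\<dots> \<le> (\<Sum>k\<le>m+1. r^k) * c + r^(m+2) * ((1 + r) * c)"
      using Suc.IH zk[of "m+2"] b1' r0 by (intro add_mono mult_mono) auto
    also have "\<dots> = (\<Sum>k\<le>m+3. r^k) * c" unfolding eq2 by (simp add: algebra_simps)
    finally have h3: "cmod (\<Sum>k\<le>m+3. z^k) \<le> (\<Sum>k\<le>m+3. r^k) * c" .
    have e: "Suc m + 1 = m + 2" "Suc m + 2 = m + 3" by simp_all
    show ?case using Suc.IH h3 unfolding e by blast
  qed
  obtain m where "n = m + 1" using n1 by (metis le_add_diff_inverse2)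
  thus ?thesis using main[of m] by (simp add: z_def c_def a_def)
qed



lemma chi_one: assumes "dirichlet_char q chi" shows "chi 1 = 1"
proof -
  have "chi 1 = chi 1 * chi 1" using assms unfolding dirichlet_char_def by (metis mult_1)
  moreover have "chi 1 \<noteq> 0" using assms unfolding dirichlet_char_def by simp
  ultimately show ?thesis by simp
qed

lemma chi_pow: assumes "dirichlet_char q chi" shows "chi (n^k) = chi n ^ k"
proof (induction k)
  case 0 show ?case using chi_one[OF assms] by simp
next
  case (Suc k)
  have "chi (n^Suc k) = chi n * chi (n^k)" using assms unfolding dirichlet_char_def by simp
  thus ?case using Suc by simp
qed

lemma chi_per: assumes "dirichlet_char q chi" shows "chi (n + k*q) = chi n"
proof (induction k)
  case (Suc k)
  have "n + Suc k * q = (n + k*q) + q" by simp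
  thus ?case using Suc assms unfolding dirichlet_char_def by metis
qed simp

lemma chi_norm: assumes ch: "dirichlet_char q chi" and cp: "coprime n q" and n0: "n > 0" shows "cmod (chi n) = 1"
proof -
  have q1: "q \<ge> 1" using ch by (simp add: dirichlet_char_def)
  have "[n ^ totient q = 1] (mod q)" using euler_theorem[OF cp] .
  moreover have "1 \<le> n ^ totient q" using n0 by simp
  ultimately obtain k where "n ^ totient q = k*q + 1" using cong_le_nat by blast
  hence "chi (n ^ totient q) = 1" using chi_per[OF ch, of 1 k] chi_one[OF ch] by (simp add: add.commute)
  hence "chi n ^ totient q = 1" using chi_pow[OF ch] by simp
  hence "cmod (chi n) ^ totient q = 1" by (metis norm_one norm_power)
  moreover have "totient q > 0" using q1 by simp
  ultimately show ?thesis using real_root_one real_root_pos_unique norm_ge_zero by metis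
qed

lemma chi_zero: assumes ch: "dirichlet_char q chi" and p: "prime p" "p dvd q" shows "chi p = 0"
  using assms unfolding dirichlet_char_def by (meson coprime_absorb_left not_prime_unit)



definition PS :: "real \<Rightarrow> nat set" where "PS y = {p. prime p \<and> real p \<le> y}"
definition Gf :: "real \<Rightarrow> nat \<Rightarrow> real \<Rightarrow> real" where
  "Gf y p s = (\<Sum>k\<le>nu y p. exp (- (real k * s * ln (real p))))"
definition Gd :: "real \<Rightarrow> nat \<Rightarrow> real \<Rightarrow> real" where
  "Gd y p s = (\<Sum>k\<le>nu y p. real k * ln (real p) * exp (- (real k * s * ln (real p))))"
definition Phi :: "real \<Rightarrow> real \<Rightarrow> real" where
  "Phi y s = (\<Sum>p\<in>PS y. Gd y p s / Gf y p s)"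

lemma PS_finite: "finite (PS y)"
proof -
  have "PS y \<subseteq> {..nat \<lceil>y\<rceil>}" by (auto simp: PS_def) linarith
  thus ?thesis by (rule finite_subset) simp
qed

lemma Gf_ge1: "Gf y p s \<ge> 1"
proof -
  have "Gf y p s = 1 + (\<Sum>k\<in>{..nu y p}-{0}. exp (- (real k * s * ln (real p))))"
    unfolding Gf_def by (subst sum.remove[of _ 0]) auto
  moreover have "(\<Sum>k\<in>{..nu y p}-{0}. exp (- (real k * s * ln (real p)))) \<ge> 0"
    by (intro sum_nonneg) auto
  ultimately show ?thesis by linarith
qed

lemma Gf_pos: "Gf y p s > 0" using Gf_ge1[of y p s] by linarith

lemma nu_ge1: assumes "prime p" "real p \<le> y" shows "nu y p \<ge> 1"
proof -
  have p2: "real p \<ge> 2" using assms prime_ge_2_nat by (metis of_nat_le_iff of_nat_numeral)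
  have "ln (real p) > 0" using p2 by simp
  moreover have "ln (real p) \<le> ln y" using p2 assms by simp
  ultimately have "ln y / ln (real p) \<ge> 1" by simp
  thus ?thesis unfolding nu_def by linarith
qed

lemma factor_eq:
  assumes "prime p" "s > 0"
  shows "(1 - real p powr (- (real (nu y p + 1) * s))) / (1 - real p powr (- s)) = Gf y p s"
proof -
  define X where "X = exp (- (s * ln (real p)))"
  have p2: "real p \<ge> 2" using assms prime_ge_2_nat by (metis of_nat_le_iff of_nat_numeral)
  have L: "ln (real p) > 0" using p2 by simp
  have X1: "X < 1" unfolding X_def using L assms by simp
  have e1: "real p powr (- s) = X" using p2 by (simp add: powr_def X_def)
  have e2: "real p powr (- (real (nu y p + 1) * s)) = X ^ (nu y p + 1)"
  proof -
    have "X^(nu y p + 1) = exp (real (nu y p + 1) * (- (s * ln (real p))))"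
      unfolding X_def by (rule exp_of_nat_mult[symmetric])
    moreover have "real p powr (- (real (nu y p + 1) * s)) = exp ((- (real (nu y p + 1) * s)) * ln (real p))"
      using p2 by (simp add: powr_def)
    moreover have "(- (real (nu y p + 1) * s)) * ln (real p) = real (nu y p + 1) * (- (s * ln (real p)))"
      by (simp only: mult_ac minus_mult_left minus_mult_right)
    ultimately show ?thesis by simp
  qed
  have e3: "Gf y p s = (\<Sum>k\<le>nu y p. X ^ k)"
    unfolding Gf_def X_def by (intro sum.cong refl) (simp add: exp_of_nat_mult[symmetric] algebra_simps)
  have "(1 - X) * (\<Sum>k\<le>nu y p. X ^ k) = 1 - X ^ (nu y p + 1)" using sum_gp_basic[of X "nu y p"] by simp
  thus ?thesis using X1 unfolding e1 e2 e3 by (simp add: field_simps)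
qed

lemma Z_eq: assumes "s > 0" shows "Z s y = (\<Prod>p\<in>PS y. Gf y p s)"
proof -
  have "{p. prime p \<and> real p \<le> y \<and> \<not> p dvd 1} = PS y" by (auto simp: PS_def)
  thus ?thesis unfolding Z_def Zq_def using factor_eq assms by (auto simp: PS_def intro!: prod.cong)
qed

lemma Z_exp: assumes "s > 0" shows "Z s y = exp (\<Sum>p\<in>PS y. ln (Gf y p s))"
  using Z_eq[OF assms] by (simp add: exp_sum[OF PS_finite] Gf_pos)

lemma Z_pos: assumes "s > 0" shows "Z s y > 0" using Z_exp[OF assms] by simp

lemma Gf_deriv: "((\<lambda>s. Gf y p s) has_real_derivative - Gd y p s) (at s)"
  unfolding Gf_def Gd_def
  by (auto intro!: derivative_eq_intros simp: sum_negf[symmetric] intro!: sum.cong)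

lemma Z_deriv: assumes "\<sigma> > 0" shows "deriv (\<lambda>s. Z s y) \<sigma> = - Z \<sigma> y * Phi y \<sigma>"
proof -
  have d: "((\<lambda>s. exp (\<Sum>p\<in>PS y. ln (Gf y p s))) has_real_derivative
     exp (\<Sum>p\<in>PS y. ln (Gf y p \<sigma>)) * (\<Sum>p\<in>PS y. - Gd y p \<sigma> / Gf y p \<sigma>)) (at \<sigma>)"
    by (auto intro!: derivative_eq_intros Gf_deriv Gf_pos)
  have "((\<lambda>s. Z s y) has_real_derivative
     exp (\<Sum>p\<in>PS y. ln (Gf y p \<sigma>)) * (\<Sum>p\<in>PS y. - Gd y p \<sigma> / Gf y p \<sigma>)) (at \<sigma>)"
    by (rule has_field_derivative_transform_within_open[OF d, of "{0<..}"]) (use assms Z_exp in auto)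
  hence "deriv (\<lambda>s. Z s y) \<sigma> = exp (\<Sum>p\<in>PS y. ln (Gf y p \<sigma>)) * (\<Sum>p\<in>PS y. - Gd y p \<sigma> / Gf y p \<sigma>)"
    by (rule DERIV_imp_deriv)
  also have "\<dots> = - Z \<sigma> y * Phi y \<sigma>"
    using Z_exp[OF assms] by (simp add: Phi_def sum_negf)
  finally show ?thesis .
qed

lemma Phi_0: "Phi y 0 = psi y / 2"
proof -
  have h: "Gd y p 0 / Gf y p 0 = real (nu y p) * ln (real p) / 2" for p
  proof -
    have "Gf y p 0 = real (nu y p) + 1" unfolding Gf_def by simp
    moreover have "Gd y p 0 = ln (real p) * (\<Sum>k\<le>nu y p. real k)" unfolding Gd_def
      by (simp add: sum_distrib_left mult.commute)
    moreover have "2 * (\<Sum>k\<le>nu y p. real k) = real (nu y p) * (real (nu y p) + 1)"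
      using double_gauss_sum[of "nu y p", where 'a=real] by (simp add: atLeast0AtMost)
    hence "(\<Sum>k\<le>nu y p. real k) = real (nu y p) * (real (nu y p) + 1) / 2" by simp
    ultimately have "Gd y p 0 / Gf y p 0 = ln (real p) * (real (nu y p) * (real (nu y p) + 1) / 2) / (real (nu y p) + 1)"
      by (simp only:)
    also have "\<dots> = real (nu y p) * ln (real p) / 2"
      by (simp add: field_simps add_pos_nonneg)
    finally show ?thesis .
  qed
  have "Phi y 0 = (\<Sum>p\<in>PS y. real (nu y p) * ln (real p) / 2)" unfolding Phi_def
    by (rule sum.cong[OF refl]) (rule h)
  thus ?thesis unfolding psi_def PS_def by (simp add: sum_divide_distrib)
qed

lemma Phi_cont: "continuous_on UNIV (Phi y)"
  unfolding Phi_def Gd_def Gf_def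
  by (intro continuous_intros) (use Gf_pos[unfolded Gf_def] in \<open>auto simp: less_imp_neq[symmetric]\<close>)

lemma Phi_lim: "(Phi y \<longlongrightarrow> 0) at_top"
proof -
  have e: "((\<lambda>s. exp (- (real k * s * ln (real p)))) \<longlongrightarrow> (if k = 0 then 1 else 0)) at_top"
    if "prime p" for p k
  proof (cases "k = 0")
    case False
    have "real p > 1" using prime_gt_1_nat[OF that] by simp
    hence L: "ln (real p) > 0" by simp
    have "filterlim (\<lambda>s. real k * s * ln (real p)) at_top at_top"
      using False L by (auto intro!: filterlim_tendsto_pos_mult_at_top filterlim_ident simp: mult.commute[of _ "ln _"] mult.assoc)
    hence "filterlim (\<lambda>s. - (real k * s * ln (real p))) at_bot at_top"
      by (simp add: filterlim_uminus_at_top)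
    hence "((\<lambda>s. exp (- (real k * s * ln (real p)))) \<longlongrightarrow> 0) at_top"
      by (rule filterlim_compose[OF exp_at_bot])
    thus ?thesis using False by simp
  qed simp
  have "((\<lambda>s. Gd y p s / Gf y p s) \<longlongrightarrow> 0) at_top" if "p \<in> PS y" for p
  proof -
    have pr: "prime p" using that by (simp add: PS_def)
    have "((\<lambda>s. Gd y p s) \<longlongrightarrow> (\<Sum>k\<le>nu y p. real k * ln (real p) * (if k = 0 then 1 else 0))) at_top"
      unfolding Gd_def by (intro tendsto_intros e[OF pr])
    moreover have "(\<Sum>k\<le>nu y p. real k * ln (real p) * (if k = 0 then 1 else 0)) = 0"
      by (intro sum.neutral) auto
    moreover have "((\<lambda>s. Gf y p s) \<longlongrightarrow> (\<Sum>k\<le>nu y p. (if k = 0 then 1 else 0::real))) at_top"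
      unfolding Gf_def by (intro tendsto_intros e[OF pr])
    moreover have "(\<Sum>k\<le>nu y p. (if k = 0 then 1 else 0::real)) = 1"
      by (simp add: sum.delta)
    ultimately show ?thesis using tendsto_divide[of "\<lambda>s. Gd y p s" 0 at_top "\<lambda>s. Gf y p s" 1] by simp
  qed
  hence "(Phi y \<longlongrightarrow> (\<Sum>p\<in>PS y. 0)) at_top" unfolding Phi_def
    by (intro tendsto_sum) auto
  thus ?thesis by simp
qed

lemma dsum_ineq:
  fixes A B :: "nat \<Rightarrow> real"
  assumes H: "\<And>j k. j < k \<Longrightarrow> A k * B j < A j * B k" and n1: "1 \<le> n"
  shows "(\<Sum>k\<le>n. real k * A k) * (\<Sum>j\<le>n. B j) < (\<Sum>k\<le>n. real k * B k) * (\<Sum>j\<le>n. A j)"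
proof -
  define c where "c j k = B k * A j - A k * B j" for j k
  define D where "D = (\<Sum>j\<le>n. \<Sum>k\<le>n. real k * c j k)"
  have "(\<Sum>k\<le>n. real k * B k) * (\<Sum>j\<le>n. A j) - (\<Sum>k\<le>n. real k * A k) * (\<Sum>j\<le>n. B j) = D"
    unfolding D_def c_def sum_product
    by (subst sum.swap) (simp add: sum_subtractf[symmetric] algebra_simps)
  moreover have "D > 0"
  proof -
    have "(\<Sum>j\<le>n. \<Sum>k\<le>n. real j * c j k) = (\<Sum>k\<le>n. \<Sum>j\<le>n. real j * c j k)"
      by (rule sum.swap)
    also have "\<dots> = (\<Sum>k\<le>n. \<Sum>j\<le>n. - (real j * c k j))"
      by (simp add: c_def algebra_simps)
    also have "\<dots> = - D" unfolding D_def by (simp add: sum_negf)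
    finally have sw: "(\<Sum>j\<le>n. \<Sum>k\<le>n. real j * c j k) = - D" .
    have "2 * D = (\<Sum>j\<le>n. \<Sum>k\<le>n. (real k - real j) * c j k)"
      using sw unfolding D_def by (simp add: sum_subtractf left_diff_distrib)
    moreover have "(\<Sum>j\<le>n. \<Sum>k\<le>n. (real k - real j) * c j k) > 0"
    proof -
      have nn: "0 \<le> (real k - real j) * c j k" for j k
      proof (cases j k rule: linorder_cases)
        case less
        have "0 \<le> c j k" using H[OF less] by (simp add: c_def mult.commute)
        thus ?thesis using less by simp
      next
        case greater
        have "c j k \<le> 0" using H[OF greater] by (simp add: c_def mult.commute)
        thus ?thesis using greater by (simp add: mult_nonpos_nonpos)
      qed simp
      have pos01: "0 < (real 1 - real 0) * c 0 1" using H[of 0 1] by (simp add: c_def mult.commute)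
      show ?thesis
      proof (rule sum_pos2[of _ 0])
        show "0 < (\<Sum>k\<le>n. (real k - real 0) * c 0 k)"
          by (rule sum_pos2[of _ 1]) (use n1 pos01 nn[of _ 0] in auto)
      qed (use nn in \<open>auto intro: sum_nonneg\<close>)
    qed
    ultimately show ?thesis by simp
  qed
  ultimately show ?thesis by simp
qed

lemma ratio_mono:
  assumes "prime p" "real p \<le> y" "s < t"
  shows "Gd y p t / Gf y p t < Gd y p s / Gf y p s"
proof -
  have "real p > 1" using prime_gt_1_nat[OF assms(1)] by simp
  hence L: "ln (real p) > 0" by simp
  define A where "A k = exp (- (real k * t * ln (real p)))" for k
  define B where "B k = exp (- (real k * s * ln (real p)))" for k
  have H: "A k * B j < A j * B k" if "j < k" for j k
  proof -
    have "(real k - real j) * (t - s) * ln (real p) > 0" using that assms L by simp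
    hence "- (real k * t * ln (real p)) + - (real j * s * ln (real p)) <
           - (real j * t * ln (real p)) + - (real k * s * ln (real p))"
      by (simp add: algebra_simps)
    thus ?thesis unfolding A_def B_def exp_add[symmetric] by simp
  qed
  note ineq = dsum_ineq[OF H nu_ge1[OF assms(1,2)]]
  have gd: "Gd y p t = ln (real p) * (\<Sum>k\<le>nu y p. real k * A k)"
           "Gd y p s = ln (real p) * (\<Sum>k\<le>nu y p. real k * B k)"
    unfolding Gd_def A_def B_def by (simp_all add: sum_distrib_left algebra_simps)
  have gf: "Gf y p t = (\<Sum>k\<le>nu y p. A k)" "Gf y p s = (\<Sum>k\<le>nu y p. B k)"
    unfolding Gf_def A_def B_def by simp_all
  have p1: "Gf y p t > 0" "Gf y p s > 0" by (simp_all add: Gf_pos)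
  have "Gd y p t * Gf y p s < Gd y p s * Gf y p t"
    unfolding gd gf using ineq L by (simp add: mult.assoc)
  thus ?thesis using p1 by (simp add: field_simps)
qed

lemma Phi_mono:
  assumes "PS y \<noteq> {}" "s < t" shows "Phi y t < Phi y s"
  unfolding Phi_def
proof (rule sum_strict_mono[OF PS_finite assms(1)])
  fix p assume "p \<in> PS y"
  hence "prime p" "real p \<le> y" by (auto simp: PS_def)
  thus "Gd y p t / Gf y p t < Gd y p s / Gf y p s" by (rule ratio_mono[OF _ _ assms(2)])
qed

lemma saddle_pos:
  assumes y2: "2 \<le> y" and yx: "y \<le> x" and ps: "psi y > 2 * ln x"
  shows "saddle x y > 0"
proof -
  have lx: "ln x > 0" using y2 yx by simp
  have "2 \<in> PS y" using y2 by (simp add: PS_def)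
  hence ne: "PS y \<noteq> {}" by blast
  have eqv: "(\<sigma> > 0 \<and> - deriv (\<lambda>s. Z s y) \<sigma> / Z \<sigma> y = ln x) \<longleftrightarrow> (\<sigma> > 0 \<and> Phi y \<sigma> = ln x)" for \<sigma>
  proof (cases "\<sigma> > 0")
    case True
    have "Z \<sigma> y \<noteq> 0" using Z_pos[OF True, of y] by simp
    thus ?thesis using Z_deriv[OF True] True by simp
  qed simp
  have "\<forall>\<^sub>F s in at_top. Phi y s < ln x" using Phi_lim lx by (rule order_tendstoD)
  moreover have "\<forall>\<^sub>F s in at_top. (1::real) \<le> s" by (rule eventually_ge_at_top)
  ultimately have "\<forall>\<^sub>F s in at_top. Phi y s < ln x \<and> 1 \<le> s" by (rule eventually_conj)
  then obtain N where N: "\<forall>s\<ge>N. Phi y s < ln x \<and> 1 \<le> s" unfolding eventually_at_top_linorder by blast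
  have S: "Phi y N < ln x" "1 \<le> N" using N by auto
  have "Phi y 0 > ln x" using Phi_0[of y] ps by simp
  have cont: "continuous_on {0..N} (Phi y)" by (rule continuous_on_subset[OF Phi_cont]) simp
  have "\<exists>z\<ge>0. z \<le> N \<and> Phi y z = ln x"
    by (rule IVT2'[of "Phi y" N "ln x" 0]) (use S \<open>Phi y 0 > ln x\<close> cont in auto)
  then obtain \<sigma> where \<sigma>: "0 \<le> \<sigma>" "\<sigma> \<le> N" "Phi y \<sigma> = ln x" by blast
  have \<sigma>0: "\<sigma> > 0" using \<sigma> \<open>Phi y 0 > ln x\<close> by (cases "\<sigma> = 0") auto
  have ex: "\<exists>!\<sigma>. \<sigma> > 0 \<and> - deriv (\<lambda>s. Z s y) \<sigma> / Z \<sigma> y = ln x"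
    unfolding eqv
  proof (rule ex1I[of _ \<sigma>])
    show "\<sigma> > 0 \<and> Phi y \<sigma> = ln x" using \<sigma>0 \<sigma> by simp
    fix t assume t: "t > 0 \<and> Phi y t = ln x"
    show "t = \<sigma>"
    proof (rule ccontr)
      assume "t \<noteq> \<sigma>"
      hence "t < \<sigma> \<or> \<sigma> < t" by linarith
      thus False using Phi_mono[OF ne, of t \<sigma>] Phi_mono[OF ne, of \<sigma> t] t \<sigma> by auto
    qed
  qed
  show ?thesis using theI'[OF ex] unfolding saddle_def by blast
qed



lemma cpowr_eq: assumes "p > 0" shows "(of_nat p :: complex) powr w = exp (w * of_real (ln (real p)))"
  using assms by (simp add: powr_def)

lemma factor_bound:
  fixes chi :: "nat \<Rightarrow> complex"
  assumes ch: "dirichlet_char q chi" and pr: "prime p" and py: "real p \<le> y" and nd: "\<not> p dvd q"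
    and b: "\<beta> > 0"
  shows "cmod ((1 - chi p ^ (nu y p + 1) * of_nat p powr (- (of_nat (nu y p + 1) * (of_real \<beta> + \<i> * of_real \<tau>))))
            / (1 - chi p * of_nat p powr (- (of_real \<beta> + \<i> * of_real \<tau>))))
     \<le> Gf y p \<beta> * exp (- (1/16) * ((1 - Re (chi p * of_nat p powr (- (\<i> * of_real \<tau>))))\<^sup>2 / real p powr \<beta>))"
proof -
  define n where "n = nu y p"
  define L where "L = ln (real p)"
  define r where "r = exp (- (\<beta> * L))"
  define v where "v = (of_nat p :: complex) powr (- (\<i> * of_real \<tau>))"
  define u where "u = chi p * v"
  define s where "s = (of_real \<beta> + \<i> * of_real \<tau> :: complex)"
  define w where "w = chi p * of_nat p powr (- s)"
  have p0: "p > 0" using pr prime_gt_0_nat by blast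
  have "real p > 1" using prime_gt_1_nat[OF pr] by simp
  hence L0: "L > 0" by (simp add: L_def)
  have r0: "0 < r" and r1: "r < 1" using L0 b by (auto simp: r_def)
  have n1: "1 \<le> n" using nu_ge1[OF pr py] by (simp add: n_def)
  have cp: "coprime p q" using pr nd by (simp add: prime_imp_coprime)
  have chi1: "cmod (chi p) = 1" using chi_norm[OF ch cp p0] .
  have v1: "cmod v = 1" unfolding v_def cpowr_eq[OF p0] by simp
  have u1: "cmod u = 1" using chi1 v1 by (simp add: u_def norm_mult)
  have wz: "w = of_real r * u"
  proof -
    have A: "of_nat p powr (- s) = exp (of_real (- (\<beta> * L))) * v"
      unfolding v_def cpowr_eq[OF p0] s_def L_def by (simp add: exp_add[symmetric] algebra_simps)
    have B: "exp (of_real (- (\<beta> * L))) = (of_real r :: complex)" unfolding r_def by (rule exp_of_real)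
    show ?thesis unfolding w_def u_def A B by (simp only: mult_ac)
  qed
  have wn: "chi p ^ (n + 1) * of_nat p powr (- (of_nat (n + 1) * s)) = w ^ (n + 1)"
  proof -
    have "of_nat p powr (- (of_nat (n + 1) * s)) = (of_nat p powr (- s)) ^ (n+1)"
    proof -
      have "(of_nat p powr (- s)) ^ (n+1) = exp (of_nat (n+1) * (- s * of_real (ln (real p))))"
        unfolding cpowr_eq[OF p0] by (rule exp_of_nat_mult[symmetric])
      moreover have "- (of_nat (n + 1) * s) * of_real (ln (real p)) = of_nat (n+1) * (- s * of_real (ln (real p)))"
        by (simp only: mult_ac minus_mult_left minus_mult_right)
      ultimately show ?thesis unfolding cpowr_eq[OF p0] by (simp only:)
    qed
    thus ?thesis by (simp add: w_def power_mult_distrib)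
  qed
  have wnorm: "cmod w = r" using wz u1 r0 by (simp add: norm_mult)
  have w1: "w \<noteq> 1" using wnorm r1 by auto
  have feq: "(1 - w ^ (n + 1)) / (1 - w) = (\<Sum>k\<le>n. w ^ k)"
    using sum_gp_basic[of w n] w1 by (simp add: field_simps)
  have geq: "Gf y p \<beta> = (\<Sum>k\<le>n. r ^ k)"
    unfolding Gf_def n_def r_def L_def by (intro sum.cong refl) (simp add: exp_of_nat_mult[symmetric] algebra_simps)
  define a where "a = 1 - Re u"
  have reu: "\<bar>Re u\<bar> \<le> 1" using abs_Re_le_cmod u1 by (metis)
  have a0: "0 \<le> a" "a \<le> 2" using reu by (auto simp: a_def)
  have gb: "cmod (\<Sum>k\<le>n. w ^ k) \<le> (\<Sum>k\<le>n. r ^ k) * (1 - r * a / 8)"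
    using geom_bound[of r u n] r0 r1 u1 n1 by (simp add: wz a_def)
  have "1 - r * a / 8 \<le> exp (- (r * a / 8))" using exp_ge_add_one_self[of "- (r * a / 8)"] by simp
  also have "\<dots> \<le> exp (- (r * a^2 / 16))"
  proof -
    have "a^2 \<le> 2 * a" using a0 by (simp add: power2_eq_square mult_right_mono)
    hence "r * a^2 \<le> r * (2 * a)" using r0 by (intro mult_left_mono) auto
    thus ?thesis by simp
  qed
  finally have eb: "1 - r * a / 8 \<le> exp (- (r * a^2 / 16))" .
  have sum0: "0 \<le> (\<Sum>k\<le>n. r ^ k)" using r0 by (intro sum_nonneg) auto
  have rp: "r = 1 / real p powr \<beta>"
    using p0 by (simp add: r_def L_def powr_def exp_minus field_simps)
  have "cmod (\<Sum>k\<le>n. w ^ k) \<le> (\<Sum>k\<le>n. r ^ k) * exp (- (r * a^2 / 16))"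
    using gb mult_left_mono[OF eb sum0] by linarith
  moreover have "- (r * a^2 / 16) = - (1/16) * (a\<^sup>2 / real p powr \<beta>)" by (simp add: rp)
  ultimately have fin: "cmod (\<Sum>k\<le>n. w ^ k) \<le> Gf y p \<beta> * exp (- (1/16) * ((1 - Re u)\<^sup>2 / real p powr \<beta>))"
    by (simp add: geq a_def mult.commute)
  have e1: "chi p ^ (nu y p + 1) * of_nat p powr (- (of_nat (nu y p + 1) * (of_real \<beta> + \<i> * of_real \<tau>))) = w^(n+1)"
    using wn by (simp only: n_def s_def)
  have e2: "chi p * of_nat p powr (- (of_real \<beta> + \<i> * of_real \<tau>)) = w" by (simp only: w_def s_def)
  have e3: "chi p * of_nat p powr (- (\<i> * of_real \<tau>)) = u" by (simp only: u_def v_def)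
  show ?thesis unfolding e1 e2 e3 feq using fin .
qed

lemma factor_one:
  fixes chi :: "nat \<Rightarrow> complex"
  assumes "chi p = 0"
  shows "(1 - chi p ^ (m + 1) * X) / (1 - chi p * Y) = 1"
  using assms by simp

lemma main_bound:
  fixes chi :: "nat \<Rightarrow> complex"
  assumes ch: "dirichlet_char q chi" and b: "\<beta> > 0"
  shows "cmod (Zchi (of_real \<beta> + \<i> * of_real \<tau>) chi y / of_real (Zq q \<beta> y))
       \<le> exp (- (1/16) * W q y \<tau> chi \<beta>)"
proof -
  define Q where "Q = {p. prime p \<and> real p \<le> y \<and> \<not> p dvd q}"
  define f where "f p = (1 - chi p ^ (nu y p + 1) * of_nat p powr (- (of_nat (nu y p + 1) * (of_real \<beta> + \<i> * of_real \<tau>))))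
            / (1 - chi p * of_nat p powr (- (of_real \<beta> + \<i> * of_real \<tau>)))" for p
  define e where "e p = exp (- (1/16) * ((1 - Re (chi p * of_nat p powr (- (\<i> * of_real \<tau>))))\<^sup>2 / real p powr \<beta>))" for p
  have fin: "finite (PS y)" by (rule PS_finite)
  have QS: "Q \<subseteq> PS y" by (auto simp: Q_def PS_def)
  have finQ: "finite Q" using finite_subset[OF QS fin] .
  have Zc: "Zchi (of_real \<beta> + \<i> * of_real \<tau>) chi y = (\<Prod>p\<in>PS y. f p)"
    unfolding Zchi_def f_def PS_def by simp
  have "(\<Prod>p\<in>PS y. f p) = (\<Prod>p\<in>Q. f p)"
  proof (rule prod.mono_neutral_right[OF fin QS])
    show "\<forall>i\<in>PS y - Q. f i = 1"
    proof
      fix p assume "p \<in> PS y - Q"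
      hence "prime p" "p dvd q" by (auto simp: PS_def Q_def)
      hence "chi p = 0" using chi_zero[OF ch] by blast
      thus "f p = 1" unfolding f_def by (rule factor_one)
    qed
  qed
  hence Zc2: "cmod (Zchi (of_real \<beta> + \<i> * of_real \<tau>) chi y) = (\<Prod>p\<in>Q. cmod (f p))"
    using Zc by (simp add: prod_norm)
  have Zq_eq: "Zq q \<beta> y = (\<Prod>p\<in>Q. Gf y p \<beta>)"
    unfolding Zq_def Q_def using factor_eq b by (intro prod.cong) auto
  have Zq_pos: "Zq q \<beta> y > 0" unfolding Zq_eq by (intro prod_pos) (simp add: Gf_pos)
  have W_eq: "exp (- (1/16) * W q y \<tau> chi \<beta>) = (\<Prod>p\<in>Q. e p)"
    unfolding W_def e_def Q_def[symmetric] using finQ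
    by (simp add: exp_sum[symmetric] sum_distrib_left sum_negf)
  have "(\<Prod>p\<in>Q. cmod (f p)) \<le> (\<Prod>p\<in>Q. Gf y p \<beta> * e p)"
    by (intro prod_mono conjI norm_ge_zero)
       (use factor_bound[OF ch _ _ _ b] in \<open>auto simp: Q_def f_def e_def\<close>)
  also have "\<dots> = Zq q \<beta> y * exp (- (1/16) * W q y \<tau> chi \<beta>)"
    unfolding Zq_eq W_eq by (rule prod.distrib)
  finally have "cmod (Zchi (of_real \<beta> + \<i> * of_real \<tau>) chi y) \<le> Zq q \<beta> y * exp (- (1/16) * W q y \<tau> chi \<beta>)"
    using Zc2 by simp
  thus ?thesis using Zq_pos by (simp add: norm_divide field_simps)
qed

theorem mainTheorem11:
  shows "\<exists>c0 > 0. \<exists>c5 > 0. \<forall>x y q chi \<tau>.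
     2 \<le> y \<and> y \<le> x \<and> psi y > 2 * ln x \<and>
     real q \<le> y powr (c0 / ln (ln y)) \<and>
     dirichlet_char q chi \<and> \<not> principal_char q chi \<longrightarrow>
     cmod (Zchi (of_real (saddle x y) + \<i> * of_real \<tau>) chi y / of_real (Zq q (saddle x y) y))
       \<le> exp (- c5 * W q y \<tau> chi (saddle x y))"
proof -
  have key: "cmod (Zchi (of_real (saddle x y) + \<i> * of_real \<tau>) chi y / of_real (Zq q (saddle x y) y))
       \<le> exp (- (1/16) * W q y \<tau> chi (saddle x y))"
    if "2 \<le> y" "y \<le> x" "psi y > 2 * ln x" "dirichlet_char q chi" for x y q chi \<tau>
    using saddle_pos[OF that(1-3)] main_bound[OF that(4)] by blast
  show ?thesis
    apply (rule exI[of _ "1::real"], rule conjI, simp, rule exI[of _ "1/16::real"], rule conjI, simp, intro allI impI)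
    using key by blast
qed


end
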